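(* Let $n\ge 6$, $1\le k\le n-1$, let $I,J$ be tightly $r$-interlacing $k$-subsets of $\{1,\dots,n\}$ with $I\setminus J=\{i_1,\dots,i_r\}$, $J\setminus I=\{j_1,\dots,j_r\}$, $1\le i_1<j_1<i_2<j_2<\dots<i_r<j_r\le n$, let $b_1,\dots,b_{2r}\in\mathbb{C}[[t]]$ with $\sum_{l=1}^{2r}b_l=0$, and put $S_m=\sum_{g=1}^m b_g$. If $\varphi=(\varphi_i)_{i=1}^n$ is an endomorphism of $\mathbb{M}(I,J)$, then there are $a,b,c,d\in\mathbb{C}[[t]]$ such that $t\mid c$, and $t\mid (d-a)S_{2m}-S_{2m}^2\,t^{-1}c$ for every $m=1,\dots,r-1$, and $\varphi_{j_r}=\begin{pmatrix}a&b\\c&d\end{pmatrix}$, $\varphi_{i_l}=\begin{pmatrix}a+S_{2l-1}t^{-1}c & tb+(d-a)S_{2l-1}-S_{2l-1}^2t^{-1}c\\ t^{-1}c & d-S_{2l-1}t^{-1}c\end{pmatrix}$, $\varphi_{j_l}=\begin{pmatrix}a+S_{2l}t^{-1}c & b+t^{-1}\big((d-a)S_{2l}-S_{2l}^2t^{-1}c\big)\\ c & d-S_{2l}t^{-1}c\end{pmatrix}$ for $l=1,\dots,r$, and $\varphi_i=\varphi_{i-1}$ for every $i\in (I\cap J)\cup(I^c\cap J^c)$ (indices of vertices taken modulo $n$, vertex $0$ = vertex $n$).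
   Context: $\Gamma_n$ is the quiver with vertices $1,\dots,n$ on a cycle (vertex $0$ identified with $n$), arrows $x_i\colon i-1\to i$, $y_i\colon i\to i-1$. $B_{k,n}$ is its completed path algebra modulo the closure of the ideal generated by $xy=yx$ and $x^k=y^{n-k}$ at every vertex; its centre is $\mathbb{C}[[t]]$, $t=\sum_i x_iy_i$. $I,J$ are tightly $r$-interlacing if there are $\{i_1,i_3,\dots,i_{2r-1}\}\subset I\setminus J$, $\{i_2,\dots,i_{2r}\}\subset J\setminus I$ with $i_1<i_2<\dots<i_{2r}<i_1$ cyclically, no larger such subsets exist, and $|I\cap J|=k-r$. The module $\mathbb{M}(I,J)$ has $V_i=\mathbb{C}[[t]]^2$ at each vertex, with $x_{i_l}=\begin{pmatrix}t&b_{2l-1}\\0&1\end{pmatrix}$, $y_{i_l}=\begin{pmatrix}1&-b_{2l-1}\\0&t\end{pmatrix}$, $x_{j_l}=\begin{pmatrix}1&b_{2l}\\0&t\end{pmatrix}$, $y_{j_l}=\begin{pmatrix}t&-b_{2l}\\0&1\end{pmatrix}$ ($l=1,\dots,r$), $x_i=tE$, $y_i=E$ for $i\notin I\cup J$, and $x_i=E$, $y_i=tE$ for $i\in I\cap J$ ($E$ the $2\times 2$ identity). An endomorphism is a tuple of $2\times2$ matrices $\varphi_i$ over $\mathbb{C}[[t]]$ with $x_i\varphi_{i-1}=\varphi_ix_i$ and $y_i\varphi_i=\varphi_{i-1}y_i$ for all $i$. Notation: if $t^dv=w$ for a positive integer $d$, then $t^{-d}w$ denotes $v$. *)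

theory Defs
  imports "HOL-Analysis.Finite_Cartesian_Product"
          "HOL-Computational_Algebra.Formal_Power_Series"
begin

text \<open>The ring C[[t]] is \<open>complex fps\<close>, with t = \<open>fps_X\<close>.
  2x2 matrices over it are elements of \<open>complex fps ^ 2 ^ 2\<close>; the matrix
  product is \<open>**\<close>.\<close>

type_synonym mat2 = "complex fps ^ 2 ^ 2"

definition mat2 :: "'a \<Rightarrow> 'a \<Rightarrow> 'a \<Rightarrow> 'a \<Rightarrow> 'a ^ 2 ^ 2" where
  "mat2 a b c d = (\<chi> i j. if i = 1 then (if j = 1 then a else b)
                                   else (if j = 1 then c else d))"

text \<open>Notation of the paper: if t^d v = w then t^{-d} w denotes v (here d = 1).\<close>
definition tinv :: "complex fps \<Rightarrow> complex fps" where
  "tinv w = (THE v. fps_X * v = w)"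

definition prev :: "nat \<Rightarrow> nat \<Rightarrow> nat" where
  "prev n i = (if i = 1 then n else i - 1)"

text \<open>A sequence s 1, ..., s m is cyclically strictly increasing
  (s 1 < s 2 < ... < s m < s 1 cyclically): some rotation of it is strictly increasing.\<close>
definition cyc_increasing :: "(nat \<Rightarrow> nat) \<Rightarrow> nat \<Rightarrow> bool" where
  "cyc_increasing s m \<longleftrightarrow>
     (\<exists>p<m. \<forall>u v. u < v \<and> v < m \<longrightarrow>
        s ((u + p) mod m + 1) < s ((v + p) mod m + 1))"

definition interlacing_of_size :: "nat set \<Rightarrow> nat set \<Rightarrow> nat \<Rightarrow> bool" where
  "interlacing_of_size I J r \<longleftrightarrow>
     (\<exists>s. cyc_increasing s (2 * r) \<and>
          (\<forall>l\<in>{1..r}. s (2 * l - 1) \<in> I - J \<and> s (2 * l) \<in> J - I))"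

definition tightly_interlacing :: "nat \<Rightarrow> nat \<Rightarrow> nat set \<Rightarrow> nat set \<Rightarrow> bool" where
  "tightly_interlacing k r I J \<longleftrightarrow>
     interlacing_of_size I J r \<and> (\<forall>r'>r. \<not> interlacing_of_size I J r') \<and>
     card (I \<inter> J) = k - r"

text \<open>The arrows of the module M(I,J). The labelling of I - J and J - I is given by
  the sequences ii, jj (ii l = i_l, jj l = j_l for l = 1..r); b l = b_l.
  Vertex v in {1..n}; x_v : V_{v-1} \<rightarrow> V_v, y_v : V_v \<rightarrow> V_{v-1}.\<close>
definition Mx :: "nat set \<Rightarrow> nat set \<Rightarrow> nat \<Rightarrow> (nat \<Rightarrow> nat) \<Rightarrow> (nat \<Rightarrow> nat)
                   \<Rightarrow> (nat \<Rightarrow> complex fps) \<Rightarrow> nat \<Rightarrow> mat2" where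
  "Mx I J r ii jj b v =
     (if \<exists>l\<in>{1..r}. v = ii l then
        (let l = THE l. l \<in> {1..r} \<and> v = ii l in mat2 fps_X (b (2 * l - 1)) 0 1)
      else if \<exists>l\<in>{1..r}. v = jj l then
        (let l = THE l. l \<in> {1..r} \<and> v = jj l in mat2 1 (b (2 * l)) 0 fps_X)
      else if v \<in> I \<inter> J then mat2 1 0 0 1
      else mat2 fps_X 0 0 fps_X)"

definition My :: "nat set \<Rightarrow> nat set \<Rightarrow> nat \<Rightarrow> (nat \<Rightarrow> nat) \<Rightarrow> (nat \<Rightarrow> nat)
                   \<Rightarrow> (nat \<Rightarrow> complex fps) \<Rightarrow> nat \<Rightarrow> mat2" where
  "My I J r ii jj b v =
     (if \<exists>l\<in>{1..r}. v = ii l then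
        (let l = THE l. l \<in> {1..r} \<and> v = ii l in mat2 1 (- b (2 * l - 1)) 0 fps_X)
      else if \<exists>l\<in>{1..r}. v = jj l then
        (let l = THE l. l \<in> {1..r} \<and> v = jj l in mat2 fps_X (- b (2 * l)) 0 1)
      else if v \<in> I \<inter> J then mat2 fps_X 0 0 fps_X
      else mat2 1 0 0 1)"

definition is_endo :: "nat \<Rightarrow> nat set \<Rightarrow> nat set \<Rightarrow> nat \<Rightarrow> (nat \<Rightarrow> nat) \<Rightarrow> (nat \<Rightarrow> nat)
                        \<Rightarrow> (nat \<Rightarrow> complex fps) \<Rightarrow> (nat \<Rightarrow> mat2) \<Rightarrow> bool" where
  "is_endo n I J r ii jj b \<phi> \<longleftrightarrow>
     (\<forall>v\<in>{1..n}. Mx I J r ii jj b v ** \<phi> (prev n v) = \<phi> v ** Mx I J r ii jj b v \<and>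
                My I J r ii jj b v ** \<phi> v = \<phi> (prev n v) ** My I J r ii jj b v)"

end

theory Submission imports Defs "HOL-Analysis.Cartesian_Space"
begin

lemma mat2_nth: "mat2 a b c d $ 1 $ 1 = a" "mat2 a b c d $ 1 $ 2 = b"
  "mat2 a b c d $ 2 $ 1 = c" "mat2 a b c d $ 2 $ 2 = d"
  by (simp_all add: mat2_def)

lemma mat2_mult:
  fixes a :: "'a::semiring_1"
  shows "mat2 a b c d ** mat2 e f g h = mat2 (a*e+b*g) (a*f+b*h) (c*e+d*g) (c*f+d*h)"
  unfolding matrix_matrix_mult_def
  by (simp add: mat2_def vec_eq_iff sum_2 forall_2)

lemma mat2_eq: "mat2 a b c d = mat2 a' b' c' d' \<longleftrightarrow> a = a' \<and> b = b' \<and> c = c' \<and> d = d'"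
  by (auto simp: mat2_def vec_eq_iff forall_2)

lemma mat2_entries: "M = mat2 (M$1$1) (M$1$2) (M$2$1) (M$2$2)"
  by (auto simp: mat2_def vec_eq_iff forall_2)

lemma tinv_X: "tinv (fps_X * v) = v"
  unfolding tinv_def by (rule the_equality) auto

lemma istep:
  fixes X :: "'a::idom"
  assumes X: "X \<noteq> 0"
    and eq: "mat2 X \<beta> 0 1 ** mat2 (a + s*c0) (bb + e) (X*c0) (d - s*c0) = Q ** mat2 X \<beta> 0 1"
    and e: "(d-a)* s - s\<^sup>2*c0 = X*e"
  shows "Q = mat2 (a + (s+\<beta>)*c0) (X*bb + (d-a)*(s+\<beta>) - (s+\<beta>)\<^sup>2*c0) c0 (d - (s+\<beta>)*c0)"
proof -
  obtain p q u w where Q: "Q = mat2 p q u w" by (rule that[OF mat2_entries])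
  have h: "X * (a + s*c0) + \<beta> * (X*c0) = p * X" "X*(bb+e) + \<beta>*(d - s*c0) = p*\<beta> + q"
     "X*c0 = u*X" "d - s*c0 = u*\<beta> + w"
    using eq unfolding Q mat2_mult mat2_eq mult_zero_right mult_zero_left add_0_right add_0_left mult_1_right mult_1_left by blast+
  have u: "u = c0" using h(3) X by (simp add: mult.commute)
  have p: "p = a + (s+\<beta>)*c0"
  proof -
    have "X * p = X * (a + (s+\<beta>)*c0)" using h(1) by (simp add: algebra_simps)
    thus ?thesis using X by simp
  qed
  have w: "w = d - (s+\<beta>)*c0" using h(4) u by (simp add: algebra_simps)
  have q: "q = X*bb + (d-a)*(s+\<beta>) - (s+\<beta>)\<^sup>2*c0"
  proof -
    have "q = X*bb + X*e + \<beta>*(d - s*c0) - p*\<beta>" using h(2) by (simp add: algebra_simps)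
    also have "\<dots> = X*bb + ((d-a)* s - s\<^sup>2*c0) + \<beta>*(d - s*c0) - p*\<beta>" using e by simp
    finally show ?thesis unfolding p by (simp add: algebra_simps power2_eq_square)
  qed
  show ?thesis using Q p q u w by simp
qed

lemma jstep:
  fixes X :: "'a::idom"
  assumes X: "X \<noteq> 0"
    and eq: "mat2 1 \<beta> 0 X ** mat2 (a + s*c0) (X*bb + (d-a)* s - s\<^sup>2*c0) c0 (d - s*c0) = Q ** mat2 1 \<beta> 0 X"
  shows "Q = mat2 (a + (s+\<beta>)*c0) (bb + (Q$1$2 - bb)) (X*c0) (d - (s+\<beta>)*c0)
     \<and> (d-a)*(s+\<beta>) - (s+\<beta>)\<^sup>2*c0 = X*(Q$1$2 - bb)"
proof -
  obtain p q u w where Q: "Q = mat2 p q u w" by (rule that[OF mat2_entries])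
  have h: "a + s*c0 + \<beta>*c0 = p" "X*bb + (d-a)* s - s\<^sup>2*c0 + \<beta>*(d - s*c0) = p*\<beta> + q*X"
     "X*c0 = u" "X*(d - s*c0) = u*\<beta> + w*X"
    using eq unfolding Q mat2_mult mat2_eq mult_zero_right mult_zero_left add_0_right add_0_left mult_1_right mult_1_left by blast+
  have w: "w = d - (s+\<beta>)*c0"
  proof -
    have "X * w = X * (d - (s+\<beta>)*c0)" using h(3,4) by (simp add: algebra_simps)
    thus ?thesis using X by simp
  qed
  have q: "(d-a)*(s+\<beta>) - (s+\<beta>)\<^sup>2*c0 = X*(q - bb)"
    using h(2) unfolding h(1)[symmetric] by (simp add: algebra_simps power2_eq_square)
  show ?thesis using Q h(1,3) w q by (simp add: mat2_nth algebra_simps)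
qed


lemma chain_const:
  fixes f :: "nat \<Rightarrow> 'a"
  assumes "p \<le> q" "\<forall>w. p < w \<and> w \<le> q \<longrightarrow> f w = f (w - 1)"
  shows "f q = f p"
  using assms
proof (induction q)
  case 0 thus ?case by simp
next
  case (Suc q)
  show ?case
  proof (cases "p = Suc q")
    case False
    hence "f q = f p" using Suc by auto
    moreover have "f (Suc q) = f q" using Suc.prems False by auto
    ultimately show ?thesis by simp
  qed simp
qed

locale prop_ctx =
  fixes n r :: nat and I J :: "nat set" and ii jj :: "nat \<Rightarrow> nat"
    and b :: "nat \<Rightarrow> complex fps" and \<phi> :: "nat \<Rightarrow> mat2"
  assumes IJ: "I \<subseteq> {1..n}" "J \<subseteq> {1..n}"
    and r1: "r \<ge> 1"
    and IJdiff: "I - J = ii ` {1..r}" "J - I = jj ` {1..r}"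
    and ord: "1 \<le> ii 1" "\<forall>l\<in>{1..r}. ii l < jj l" "\<forall>l\<in>{1..<r}. jj l < ii (l + 1)"
      "jj r \<le> n"
    and endo: "is_endo n I J r ii jj b \<phi>"
begin

lemma jj_ii_lt: "l \<in> {1..r} \<Longrightarrow> m \<in> {1..r} \<Longrightarrow> l < m \<Longrightarrow> jj l < ii m"
proof (induction m)
  case 0 thus ?case by simp
next
  case (Suc m)
  show ?case
  proof (cases "l = m")
    case True thus ?thesis using ord(3) Suc.prems by auto
  next
    case False
    hence "jj l < ii m" using Suc by auto
    also have "ii m < jj m" using ord(2) Suc.prems False by auto
    also have "jj m < ii (Suc m)" using ord(3) Suc.prems False by auto
    finally show ?thesis .
  qed
qed

lemma ord_all:
  assumes "l \<in> {1..r}" "m \<in> {1..r}"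
  shows "l < m \<Longrightarrow> jj l < ii m" "l \<le> m \<Longrightarrow> ii l < jj m"
    "l < m \<Longrightarrow> ii l < ii m" "l < m \<Longrightarrow> jj l < jj m"
proof -
  have a: "ii l < jj l" "ii m < jj m" using ord(2) assms by auto
  show "l < m \<Longrightarrow> jj l < ii m" using jj_ii_lt assms by auto
  show "l \<le> m \<Longrightarrow> ii l < jj m"
    using jj_ii_lt[OF assms] a by (cases "l = m") auto
  show "l < m \<Longrightarrow> ii l < ii m" using jj_ii_lt[OF assms] a by auto
  show "l < m \<Longrightarrow> jj l < jj m" using jj_ii_lt[OF assms] a by auto
qed

lemma ii_inj: "l \<in> {1..r} \<Longrightarrow> m \<in> {1..r} \<Longrightarrow> ii l = ii m \<Longrightarrow> l = m"
  using ord_all(3)[of l m] ord_all(3)[of m l] by (metis linorder_neqE_nat less_irrefl)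

lemma jj_inj: "l \<in> {1..r} \<Longrightarrow> m \<in> {1..r} \<Longrightarrow> jj l = jj m \<Longrightarrow> l = m"
  using ord_all(4)[of l m] ord_all(4)[of m l] by (metis linorder_neqE_nat less_irrefl)

lemma ii_ne_jj: "l \<in> {1..r} \<Longrightarrow> m \<in> {1..r} \<Longrightarrow> ii l \<noteq> jj m"
proof
  assume l: "l \<in> {1..r}" and m: "m \<in> {1..r}" and e: "ii l = jj m"
  have "ii l \<in> I - J" using IJdiff(1) l by blast
  moreover have "jj m \<in> J - I" using IJdiff(2) m by blast
  ultimately show False using e by simp
qed

lemma ii_range: "l \<in> {1..r} \<Longrightarrow> ii l \<in> {1..n}"
proof -
  assume l: "l \<in> {1..r}"
  have "ii l \<in> I - J" using IJdiff(1) l by blast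
  thus ?thesis using IJ by blast
qed
lemma jj_range: "l \<in> {1..r} \<Longrightarrow> jj l \<in> {1..n}"
proof -
  assume l: "l \<in> {1..r}"
  have "jj l \<in> J - I" using IJdiff(2) l by blast
  thus ?thesis using IJ by blast
qed

lemma Mx_ii: "l \<in> {1..r} \<Longrightarrow> Mx I J r ii jj b (ii l) = mat2 fps_X (b (2 * l - 1)) 0 1"
proof -
  assume l: "l \<in> {1..r}"
  have t: "(THE l'. l' \<in> {1..r} \<and> ii l = ii l') = l"
  proof (rule the_equality)
    show "l \<in> {1..r} \<and> ii l = ii l" using l by simp
  next
    fix l' assume "l' \<in> {1..r} \<and> ii l = ii l'"
    thus "l' = l" using ii_inj[of l l'] l by simp
  qed
  have ex: "\<exists>l'\<in>{1..r}. ii l = ii l'" using l by blast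
  show ?thesis unfolding Mx_def by (simp only: if_P[OF ex] Let_def t)
qed

lemma Mx_jj: "l \<in> {1..r} \<Longrightarrow> Mx I J r ii jj b (jj l) = mat2 1 (b (2 * l)) 0 fps_X"
proof -
  assume l: "l \<in> {1..r}"
  have t: "(THE l'. l' \<in> {1..r} \<and> jj l = jj l') = l"
  proof (rule the_equality)
    show "l \<in> {1..r} \<and> jj l = jj l" using l by simp
  next
    fix l' assume "l' \<in> {1..r} \<and> jj l = jj l'"
    thus "l' = l" using jj_inj[of l l'] l by simp
  qed
  have n: "\<not> (\<exists>l'\<in>{1..r}. jj l = ii l')"
  proof
    assume "\<exists>l'\<in>{1..r}. jj l = ii l'"
    then obtain l' where "l' \<in> {1..r}" "jj l = ii l'" by blast
    thus False using ii_ne_jj[of l' l] l by simp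
  qed
  have ex: "\<exists>l'\<in>{1..r}. jj l = jj l'" using l by blast
  show ?thesis unfolding Mx_def by (simp only: if_not_P[OF n] if_P[OF ex] Let_def t)
qed

lemma endo_at: "v \<in> {1..n} \<Longrightarrow> Mx I J r ii jj b v ** \<phi> (prev n v) = \<phi> v ** Mx I J r ii jj b v"
  using endo unfolding is_endo_def by auto

lemma other_step:
  assumes v: "v \<in> {1..n}" "\<forall>m\<in>{1..r}. ii m \<noteq> v \<and> jj m \<noteq> v"
  shows "\<phi> v = \<phi> (prev n v)"
proof -
  have n1: "\<not> (\<exists>l\<in>{1..r}. v = ii l)" "\<not> (\<exists>l\<in>{1..r}. v = jj l)" using v by auto
  have nd: "v \<notin> I - J" "v \<notin> J - I" using v IJdiff by auto
  obtain p q u w where P: "\<phi> (prev n v) = mat2 p q u w" by (rule that[OF mat2_entries])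
  obtain p' q' u' w' where Q: "\<phi> v = mat2 p' q' u' w'" by (rule that[OF mat2_entries])
  have e: "Mx I J r ii jj b v ** \<phi> (prev n v) = \<phi> v ** Mx I J r ii jj b v" using endo_at v by auto
  show ?thesis
  proof (cases "v \<in> I \<inter> J")
    case True
    have "Mx I J r ii jj b v = mat2 1 0 0 1" unfolding Mx_def by (simp only: if_not_P[OF n1(1)] if_not_P[OF n1(2)] if_P[OF True])
    thus ?thesis using e unfolding P Q by (simp add: mat2_mult mat2_eq)
  next
    case False
    have "Mx I J r ii jj b v = mat2 fps_X 0 0 fps_X" unfolding Mx_def by (simp only: if_not_P[OF n1(1)] if_not_P[OF n1(2)] if_not_P[OF False])
    thus ?thesis using e unfolding P Q by (simp add: mat2_mult mat2_eq mult.commute)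
  qed
qed

lemma prev_ge2: "v \<ge> 2 \<Longrightarrow> prev n v = v - 1" unfolding prev_def by auto

lemma between_ij:
  assumes l: "l \<in> {1..r}"
  shows "\<phi> (prev n (jj l)) = \<phi> (ii l)"
proof -
  have lt: "ii l < jj l" using ord(2) l by auto
  have i1: "ii l \<ge> 1" using ii_range l by auto
  have jn: "jj l \<le> n" using jj_range l by auto
  have "\<phi> (jj l - 1) = \<phi> (ii l)"
  proof (rule chain_const)
    show "ii l \<le> jj l - 1" using lt by auto
    show "\<forall>w. ii l < w \<and> w \<le> jj l - 1 \<longrightarrow> \<phi> w = \<phi> (w - 1)"
    proof (intro allI impI)
      fix w assume w: "ii l < w \<and> w \<le> jj l - 1"
      have "\<forall>m\<in>{1..r}. ii m \<noteq> w \<and> jj m \<noteq> w"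
      proof
        fix m assume m: "m \<in> {1..r}"
        show "ii m \<noteq> w \<and> jj m \<noteq> w"
          using ord_all[OF m l] ord_all[OF l m] w by (cases "m < l"; cases "m = l"; force)
      qed
      hence "\<phi> w = \<phi> (prev n w)" using other_step w i1 jn by auto
      thus "\<phi> w = \<phi> (w - 1)" using prev_ge2 w i1 by auto
    qed
  qed
  thus ?thesis using prev_ge2 lt i1 by auto
qed

lemma between_ji:
  assumes l: "l \<in> {1..<r}"
  shows "\<phi> (prev n (ii (Suc l))) = \<phi> (jj l)"
proof -
  have l1: "l \<in> {1..r}" "Suc l \<in> {1..r}" using l by auto
  have lt: "jj l < ii (Suc l)" using ord(3) l by auto
  have i1: "ii l \<ge> 1" "ii l < jj l" using ii_range ord(2) l1 by auto
  have jn: "ii (Suc l) \<le> n" using ii_range l1 by auto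
  have "\<phi> (ii (Suc l) - 1) = \<phi> (jj l)"
  proof (rule chain_const)
    show "jj l \<le> ii (Suc l) - 1" using lt by auto
    show "\<forall>w. jj l < w \<and> w \<le> ii (Suc l) - 1 \<longrightarrow> \<phi> w = \<phi> (w - 1)"
    proof (intro allI impI)
      fix w assume w: "jj l < w \<and> w \<le> ii (Suc l) - 1"
      have "\<forall>m\<in>{1..r}. ii m \<noteq> w \<and> jj m \<noteq> w"
      proof
        fix m assume m: "m \<in> {1..r}"
        show "ii m \<noteq> w \<and> jj m \<noteq> w"
        proof -
          have "m < l \<or> m = l \<or> m = Suc l \<or> Suc l < m" by auto
          moreover have "ii l < jj l" "ii (Suc l) < jj (Suc l)" using ord(2) l1 by auto
          ultimately show ?thesis
            using ord_all[OF m l1(2)] ord_all[OF l1(2) m] ord_all[OF m l1(1)] ord_all[OF l1(1) m] w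
            by auto
        qed
      qed
      hence "\<phi> w = \<phi> (prev n w)" using other_step w i1 jn by auto
      thus "\<phi> w = \<phi> (w - 1)" using prev_ge2 w i1 by auto
    qed
  qed
  thus ?thesis using prev_ge2 lt i1 by auto
qed

lemma wrap:
  shows "\<phi> (prev n (ii 1)) = \<phi> (jj r)"
proof -
  have r: "r \<in> {1..r}" "1 \<in> {1..r}" using r1 by auto
  have jn: "jj r \<le> n" using ord(4) .
  have ok: "\<forall>m\<in>{1..r}. ii m \<noteq> w \<and> jj m \<noteq> w" if w: "w \<in> {1..n}" "w < ii 1 \<or> jj r < w" for w
  proof
    fix m assume m: "m \<in> {1..r}"
    have "ii 1 \<le> ii m" using ord_all(3)[OF r(2) m] m by (cases "m = 1") auto
    moreover have "jj m \<le> jj r" using ord_all(4)[OF m r(1)] m by (cases "m = r") auto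
    moreover have "ii m < jj m" using ord(2) m by auto
    ultimately show "ii m \<noteq> w \<and> jj m \<noteq> w" using w by auto
  qed
  have A: "\<phi> n = \<phi> (jj r)"
  proof (rule chain_const)
    show "jj r \<le> n" by fact
    show "\<forall>w. jj r < w \<and> w \<le> n \<longrightarrow> \<phi> w = \<phi> (w - 1)"
    proof (intro allI impI)
      fix w assume w: "jj r < w \<and> w \<le> n"
      have w2: "w \<ge> 2" using w ii_range[OF r(2)] ord_all(2)[OF r(2) r(1)] r1 by auto
      hence "\<phi> w = \<phi> (prev n w)" using other_step ok w by auto
      thus "\<phi> w = \<phi> (w - 1)" using prev_ge2 w2 by auto
    qed
  qed
  show ?thesis
  proof (cases "ii 1 = 1")
    case True thus ?thesis using A by (simp add: prev_def)
  next
    case False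
    hence i2: "ii 1 \<ge> 2" using ord(1) by auto
    have B: "\<phi> (ii 1 - 1) = \<phi> 1"
    proof (rule chain_const)
      show "1 \<le> ii 1 - 1" using i2 by auto
      show "\<forall>w. 1 < w \<and> w \<le> ii 1 - 1 \<longrightarrow> \<phi> w = \<phi> (w - 1)"
      proof (intro allI impI)
        fix w assume w: "1 < w \<and> w \<le> ii 1 - 1"
        have "w \<le> n" using w ii_range[OF r(2)] by auto
        hence "w \<in> {1..n}" "w < ii 1" using w by auto
        hence "\<phi> w = \<phi> (prev n w)" using other_step ok by blast
        thus "\<phi> w = \<phi> (w - 1)" using prev_ge2 w by auto
      qed
    qed
    have "1 \<le> n" using ii_range[OF r(2)] by auto
    hence "1 \<in> {1..n}" "(1::nat) < ii 1" using i2 by auto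
    hence C: "\<phi> 1 = \<phi> n" using other_step[of 1] ok[of 1] by (simp add: prev_def)
    show ?thesis using A B C prev_ge2 i2 by auto
  qed
qed


lemma main_ind:
  assumes P0: "\<phi> (jj r) = mat2 a bb c d" and cc: "c = fps_X * c0"
    and S: "S = (\<lambda>m. \<Sum>g=1..m. b g)"
  shows "1 \<le> l \<longrightarrow> l \<le> r \<longrightarrow>
     \<phi> (ii l) = mat2 (a + S (2*l-1) * c0) (fps_X * bb + (d - a) * S (2*l-1) - (S (2*l-1))\<^sup>2 * c0)
                      c0 (d - S (2*l-1) * c0) \<and>
     (\<exists>e. (d - a) * S (2*l) - (S (2*l))\<^sup>2 * c0 = fps_X * e \<and>
          \<phi> (jj l) = mat2 (a + S (2*l) * c0) (bb + e) (fps_X * c0) (d - S (2*l) * c0))"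
proof (induction l)
  case 0 thus ?case by simp
next
  case (Suc l)
  have Ssuc: "\<And>m. S (Suc m) = S m + b (Suc m)" unfolding S by simp
  show ?case
  proof (intro impI)
    assume l: "Suc l \<le> r"
    have lr: "Suc l \<in> {1..r}" using l by auto
    have "\<exists>e. (d - a) * S (2*l) - (S (2*l))\<^sup>2 * c0 = fps_X * e \<and>
          \<phi> (prev n (ii (Suc l))) = mat2 (a + S (2*l) * c0) (bb + e) (fps_X * c0) (d - S (2*l) * c0)"
    proof (cases "l = 0")
      case True
      have "S 0 = 0" unfolding S by simp
      thus ?thesis using True wrap P0 cc by (intro exI[of _ 0]) simp
    next
      case False
      hence "l \<in> {1..<r}" using l by auto
      thus ?thesis using Suc.IH between_ji False l by auto
    qed
    then obtain e where e: "(d - a) * S (2*l) - (S (2*l))\<^sup>2 * c0 = fps_X * e"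
      and pe: "\<phi> (prev n (ii (Suc l))) = mat2 (a + S (2*l) * c0) (bb + e) (fps_X * c0) (d - S (2*l) * c0)"
      by blast
    have i1: "2 * Suc l - 1 = Suc (2 * l)" by simp
    have eq1: "mat2 fps_X (b (Suc (2*l))) 0 1 ** mat2 (a + S (2*l) * c0) (bb + e) (fps_X * c0) (d - S (2*l) * c0)
        = \<phi> (ii (Suc l)) ** mat2 fps_X (b (Suc (2*l))) 0 1"
      using endo_at[OF ii_range[OF lr]] Mx_ii[OF lr] pe i1 by simp
    have Ii: "\<phi> (ii (Suc l)) = mat2 (a + S (Suc (2*l)) * c0) (fps_X * bb + (d - a) * S (Suc (2*l)) - (S (Suc (2*l)))\<^sup>2 * c0)
                      c0 (d - S (Suc (2*l)) * c0)"
      using istep[OF fps_X_neq_zero eq1 e] Ssuc by simp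
    have eq2: "mat2 1 (b (Suc (Suc (2*l)))) 0 fps_X ** mat2 (a + S (Suc (2*l)) * c0) (fps_X * bb + (d - a) * S (Suc (2*l)) - (S (Suc (2*l)))\<^sup>2 * c0)
                      c0 (d - S (Suc (2*l)) * c0)
        = \<phi> (jj (Suc l)) ** mat2 1 (b (Suc (Suc (2*l)))) 0 fps_X"
      using endo_at[OF jj_range[OF lr]] Mx_jj[OF lr] between_ij[OF lr] Ii by simp
    note J = jstep[OF fps_X_neq_zero eq2]
    have i2: "2 * Suc l = Suc (Suc (2 * l))" by simp
    show "\<phi> (ii (Suc l)) = mat2 (a + S (2*Suc l-1) * c0) (fps_X * bb + (d - a) * S (2*Suc l-1) - (S (2*Suc l-1))\<^sup>2 * c0)
                      c0 (d - S (2*Suc l-1) * c0) \<and>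
     (\<exists>e. (d - a) * S (2*Suc l) - (S (2*Suc l))\<^sup>2 * c0 = fps_X * e \<and>
          \<phi> (jj (Suc l)) = mat2 (a + S (2*Suc l) * c0) (bb + e) (fps_X * c0) (d - S (2*Suc l) * c0))"
      unfolding i1 i2 using Ii J by (auto simp: Ssuc[of "Suc (2*l)"])
  qed
qed

end

theorem proposition3p2:
  fixes n k r :: nat and I J :: "nat set" and ii jj :: "nat \<Rightarrow> nat"
    and b :: "nat \<Rightarrow> complex fps" and \<phi> :: "nat \<Rightarrow> mat2"
  assumes n6: "n \<ge> 6" and k: "1 \<le> k" "k \<le> n - 1"
    and IJ: "I \<subseteq> {1..n}" "J \<subseteq> {1..n}" "card I = k" "card J = k"
    and tight: "tightly_interlacing k r I J"
    and r1: "r \<ge> 1"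
    and IJdiff: "I - J = ii ` {1..r}" "J - I = jj ` {1..r}"
    and ord: "1 \<le> ii 1" "\<forall>l\<in>{1..r}. ii l < jj l" "\<forall>l\<in>{1..<r}. jj l < ii (l + 1)"
      "jj r \<le> n"
    and bsum: "(\<Sum>l=1..2*r. b l) = 0"
    and endo: "is_endo n I J r ii jj b \<phi>"
  shows "\<exists>a bb c d :: complex fps.
     (let S = (\<lambda>m. \<Sum>g=1..m. b g) in
       fps_X dvd c \<and>
       (\<forall>m\<in>{1..r-1}. fps_X dvd ((d - a) * S (2*m) - (S (2*m))\<^sup>2 * tinv c)) \<and>
       \<phi> (jj r) = mat2 a bb c d \<and>
       (\<forall>l\<in>{1..r}.
          \<phi> (ii l) = mat2 (a + S (2*l-1) * tinv c)
                          (fps_X * bb + (d - a) * S (2*l-1) - (S (2*l-1))\<^sup>2 * tinv c)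
                          (tinv c)
                          (d - S (2*l-1) * tinv c) \<and>
          \<phi> (jj l) = mat2 (a + S (2*l) * tinv c)
                          (bb + tinv ((d - a) * S (2*l) - (S (2*l))\<^sup>2 * tinv c))
                          c
                          (d - S (2*l) * tinv c)) \<and>
       (\<forall>v\<in>{1..n}. v \<in> (I \<inter> J) \<union> ({1..n} - I - J) \<longrightarrow> \<phi> v = \<phi> (prev n v)))"
proof -
  interpret prop_ctx n r I J ii jj b \<phi>
    using IJ(1,2) r1 IJdiff ord endo by unfold_locales auto
  define S where "S = (\<lambda>m. \<Sum>g=1..m. b g)"
  define a where "a = \<phi> (jj r) $ 1 $ 1"
  define bb where "bb = \<phi> (jj r) $ 1 $ 2"
  define c where "c = \<phi> (jj r) $ 2 $ 1"
  define d where "d = \<phi> (jj r) $ 2 $ 2"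
  define c0 where "c0 = \<phi> (ii 1) $ 2 $ 1"
  have r1': "1 \<in> {1..r}" "r \<in> {1..r}" using r1 by auto
  have P0: "\<phi> (jj r) = mat2 a bb c d" unfolding a_def bb_def c_def d_def by (rule mat2_entries)
  obtain p q w where Q1: "\<phi> (ii 1) = mat2 p q c0 w"
    using mat2_entries[of "\<phi> (ii 1)"] unfolding c0_def by blast
  have "mat2 fps_X (b 1) 0 1 ** mat2 a bb c d = \<phi> (ii 1) ** mat2 fps_X (b 1) 0 1"
    using endo_at[OF ii_range[OF r1'(1)]] Mx_ii[OF r1'(1)] wrap P0 by simp
  hence cc: "c = fps_X * c0" unfolding Q1 mat2_mult mat2_eq by (simp add: mult.commute)
  have tc: "tinv c = c0" using cc tinv_X by simp
  note M = main_ind[OF P0 cc S_def]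
  have H1: "fps_X dvd c" using cc by simp
  have H2: "\<forall>m\<in>{1..r-1}. fps_X dvd ((d - a) * S (2*m) - (S (2*m))\<^sup>2 * c0)"
  proof
    fix m assume m: "m \<in> {1..r-1}"
    then obtain e where "(d - a) * S (2*m) - (S (2*m))\<^sup>2 * c0 = fps_X * e" using M[of m] by auto
    thus "fps_X dvd (d - a) * S (2*m) - (S (2*m))\<^sup>2 * c0" by simp
  qed
  have H3: "\<forall>l\<in>{1..r}.
          \<phi> (ii l) = mat2 (a + S (2*l-1) * c0) (fps_X * bb + (d - a) * S (2*l-1) - (S (2*l-1))\<^sup>2 * c0)
                      c0 (d - S (2*l-1) * c0) \<and>
          \<phi> (jj l) = mat2 (a + S (2*l) * c0) (bb + tinv ((d - a) * S (2*l) - (S (2*l))\<^sup>2 * c0)) c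
                      (d - S (2*l) * c0)"
  proof
    fix l assume l: "l \<in> {1..r}"
    have A: "\<phi> (ii l) = mat2 (a + S (2*l-1) * c0) (fps_X * bb + (d - a) * S (2*l-1) - (S (2*l-1))\<^sup>2 * c0)
                      c0 (d - S (2*l-1) * c0)" using M[of l] l by auto
    obtain e where "(d - a) * S (2*l) - (S (2*l))\<^sup>2 * c0 = fps_X * e"
      "\<phi> (jj l) = mat2 (a + S (2*l) * c0) (bb + e) (fps_X * c0) (d - S (2*l) * c0)"
      using M[of l] l by auto
    hence "\<phi> (jj l) = mat2 (a + S (2*l) * c0) (bb + tinv ((d - a) * S (2*l) - (S (2*l))\<^sup>2 * c0)) c
                      (d - S (2*l) * c0)" using cc tinv_X by simp
    thus "\<phi> (ii l) = mat2 (a + S (2*l-1) * c0) (fps_X * bb + (d - a) * S (2*l-1) - (S (2*l-1))\<^sup>2 * c0)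
                      c0 (d - S (2*l-1) * c0) \<and>
          \<phi> (jj l) = mat2 (a + S (2*l) * c0) (bb + tinv ((d - a) * S (2*l) - (S (2*l))\<^sup>2 * c0)) c
                      (d - S (2*l) * c0)" using A by simp
  qed
  have H5: "\<forall>v\<in>{1..n}. v \<in> (I \<inter> J) \<union> ({1..n} - I - J) \<longrightarrow> \<phi> v = \<phi> (prev n v)"
  proof (intro ballI impI)
    fix v assume v: "v \<in> {1..n}" "v \<in> (I \<inter> J) \<union> ({1..n} - I - J)"
    have "\<forall>m\<in>{1..r}. ii m \<noteq> v \<and> jj m \<noteq> v"
    proof
      fix m assume m: "m \<in> {1..r}"
      have "ii m \<in> I - J" "jj m \<in> J - I" using IJdiff m by auto
      thus "ii m \<noteq> v \<and> jj m \<noteq> v" using v by auto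
    qed
    thus "\<phi> v = \<phi> (prev n v)" using other_step v by auto
  qed
  show ?thesis
    unfolding Let_def S_def[symmetric] tc
    apply (rule exI[of _ a], rule exI[of _ bb], rule exI[of _ c], rule exI[of _ d])
    apply (simp only: tc)
    using H1 H2 H3 H5 P0 by blast
qed

end
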